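(* Let $T(t,\tau)$ be an evolution family on a Banach space $X$ and $\|\cdot\|_t$ a family of norms satisfying $\|x\|\le\|x\|_t\le Ct^\epsilon\|x\|$ ($x\in X$, $t\ge1$) for some $C>0$, $\epsilon\ge0$, and $\|T(t,s)x\|_t\le M(t/s)^a\|x\|_s$ for all $t\ge s\ge1$, $x\in X$, with some $M,a>0$. Let $B:[1,\infty)\to B(X)$ be strongly continuous with $\|B(t)\|\le c/t^{1+\epsilon}$ for $t\ge1$, and let $U(t,\tau)$ be the evolution family satisfying $U(t,\tau)=T(t,\tau)+\int_\tau^tT(t,s)B(s)U(s,\tau)\,ds$ for $t\ge\tau\ge1$. Then $$\|U(t,\tau)x\|_t\le M(t/\tau)^{a+cCM}\|x\|_\tau\quad\text{for all } t\ge\tau\ge1,\ x\in X.$$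
   Context: Let $X$ be a Banach space with norm $\|\cdot\|$, $B(X)$ the bounded linear operators on $X$. An evolution family is a family of bounded linear operators $T(t,\tau)$ on $X$, $t\ge\tau\ge1$, such that $T(t,t)=\mathrm{Id}$ for $t\ge1$, $T(t,s)T(s,\tau)=T(t,\tau)$ for $t\ge s\ge\tau\ge1$, and for each $\tau\ge1$ and $x\in X$ the map $s\mapsto T(s,\tau)x$ is continuous on $[\tau,\infty)$. A family of norms $\|\cdot\|_t$ is also assumed to have $t\mapsto\|x\|_t$ measurable for each $x$. *)

theory Defs
  imports "HOL-Analysis.Analysis"
begin

text \<open>Evolution family on [1,\<infinity>): T t \<tau> defined (meaningfully) for t \<ge> \<tau> \<ge> 1.\<close>
definition evolution_family :: "(real \<Rightarrow> real \<Rightarrow> ('a::banach \<Rightarrow>\<^sub>L 'a)) \<Rightarrow> bool" where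
  "evolution_family T \<longleftrightarrow>
     (\<forall>t\<ge>1. T t t = id_blinfun) \<and>
     (\<forall>t s \<tau>. t \<ge> s \<and> s \<ge> \<tau> \<and> \<tau> \<ge> 1 \<longrightarrow> T t s o\<^sub>L T s \<tau> = T t \<tau>) \<and>
     (\<forall>\<tau>\<ge>1. \<forall>x. continuous_on {\<tau>..} (\<lambda>s. blinfun_apply (T s \<tau>) x))"

definition is_norm :: "('a::real_normed_vector \<Rightarrow> real) \<Rightarrow> bool" where
  "is_norm n \<longleftrightarrow>
     (\<forall>x. n x \<ge> 0) \<and> (\<forall>x. n x = 0 \<longleftrightarrow> x = 0) \<and>
     (\<forall>x y. n (x + y) \<le> n x + n y) \<and> (\<forall>r x. n (r *\<^sub>R x) = \<bar>r\<bar> * n x)"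

definition norm_family :: "(real \<Rightarrow> 'a::real_normed_vector \<Rightarrow> real) \<Rightarrow> bool" where
  "norm_family nrm \<longleftrightarrow>
     (\<forall>t\<ge>1. is_norm (nrm t)) \<and>
     (\<forall>x. (\<lambda>t. nrm t x) \<in> borel_measurable (restrict_space lborel {1..}))"

end

theory Submission
  imports Defs
begin


lemma seminorm_sum:
  fixes n :: "'a::real_vector \<Rightarrow> real" and f :: "'b \<Rightarrow> 'a"
  assumes tri: "\<forall>x y. n (x + y) \<le> n x + n y" and hom: "\<forall>r x. n (r *\<^sub>R x) = \<bar>r\<bar> * n x"
  shows "n (sum f A) \<le> (\<Sum>i\<in>A. n (f i))"
proof (induct A rule: infinite_finite_induct)
  case (infinite A)
  have "n 0 = n (0 *\<^sub>R (0::'a))" by simp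
  also have "\<dots> = 0" using hom[rule_format, of 0 "0::'a"] by simp
  finally have "n 0 = 0" .
  then show ?case using infinite by simp
next
  case empty
  have "n 0 = n (0 *\<^sub>R (0::'a))" by simp
  also have "\<dots> = 0" using hom[rule_format, of 0 "0::'a"] by simp
  finally have "n 0 = 0" .
  then show ?case by simp
next
  case (insert x F)
  then show ?case using tri[rule_format, of "f x" "sum f F"] by simp
qed

lemma seminorm_integral:
  fixes f :: "real \<Rightarrow> 'a::real_normed_vector"
  assumes f: "(f has_integral I) {a..b}" and g: "(g has_integral J) {a..b}"
    and tri: "\<forall>x y. n (x + y) \<le> n x + n y" and hom: "\<forall>r x. n (r *\<^sub>R x) = \<bar>r\<bar> * n x"
    and K: "\<forall>x. n x \<le> K * norm x" and le: "\<forall>x\<in>{a..b}. n (f x) \<le> g x"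
  shows "n I \<le> J"
proof (rule field_le_epsilon)
  fix e :: real assume e: "e > 0"
  define K' where "K' = \<bar>K\<bar> + 1"
  have K': "K' > 0" unfolding K'_def by simp
  have e1: "e / (2*K') > 0" using e K' by simp
  from f[unfolded box_real(2)[symmetric] has_integral] e1
  obtain \<gamma> where \<gamma>: "gauge \<gamma>"
     "\<And>\<D>. \<D> tagged_division_of cbox a b \<and> \<gamma> fine \<D>
         \<Longrightarrow> norm ((\<Sum>(x, k)\<in>\<D>. Henstock_Kurzweil_Integration.content k *\<^sub>R f x) - I) < e / (2*K')"
    by meson
  from g[unfolded box_real(2)[symmetric] has_integral] e
  obtain \<delta> where \<delta>: "gauge \<delta>"
     "\<And>\<D>. \<D> tagged_division_of cbox a b \<and> \<delta> fine \<D>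
         \<Longrightarrow> norm ((\<Sum>(x, k)\<in>\<D>. Henstock_Kurzweil_Integration.content k *\<^sub>R g x) - J) < e/2"
    by (metis half_gt_zero)
  have "gauge (\<lambda>x. \<gamma> x \<inter> \<delta> x)" using \<gamma> \<delta> gauge_Int by blast
  with fine_division_exists obtain \<D>
    where p: "\<D> tagged_division_of cbox a b" "(\<lambda>x. \<gamma> x \<inter> \<delta> x) fine \<D>"
    by metis
  have "\<gamma> fine \<D>" "\<delta> fine \<D>" using fine_Int p(2) by blast+
  define S where "S = (\<Sum>(x, k)\<in>\<D>. Henstock_Kurzweil_Integration.content k *\<^sub>R f x)"
  define Sg where "Sg = (\<Sum>(x, k)\<in>\<D>. Henstock_Kurzweil_Integration.content k *\<^sub>R g x)"
  have d1: "norm (S - I) < e / (2*K')" using \<gamma>(2) p(1) \<open>\<gamma> fine \<D>\<close> S_def by blast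
  have d2: "\<bar>Sg - J\<bar> < e/2" using \<delta>(2) p(1) \<open>\<delta> fine \<D>\<close> Sg_def by fastforce
  have "n (I - S) \<le> K * norm (I - S)" using K by blast
  also have "\<dots> \<le> K' * norm (I - S)" unfolding K'_def
    by (intro mult_right_mono) auto
  also have "\<dots> \<le> K' * (e / (2*K'))"
    using d1 K' by (intro mult_left_mono) (auto simp: norm_minus_commute)
  also have "\<dots> = e/2" using K' by simp
  finally have nIS: "n (I - S) \<le> e/2" .
  have "n S \<le> (\<Sum>(x, k)\<in>\<D>. n (Henstock_Kurzweil_Integration.content k *\<^sub>R f x))"
    unfolding S_def split_def by (rule seminorm_sum[OF tri hom])
  also have "\<dots> \<le> Sg" unfolding Sg_def
  proof (rule sum_mono, clarify)
    fix x K assume xK: "(x, K) \<in> \<D>"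
    have Kx: "x \<in> K" "K \<subseteq> cbox a b" using xK p(1) by blast+
    have "Henstock_Kurzweil_Integration.content K * n (f x) \<le> Henstock_Kurzweil_Integration.content K * g x"
      using Kx le by (intro mult_left_mono) (auto simp: content_pos_le)
    then show "n (Henstock_Kurzweil_Integration.content K *\<^sub>R f x) \<le> Henstock_Kurzweil_Integration.content K *\<^sub>R g x"
      using hom by (simp add: content_pos_le)
  qed
  finally have nS: "n S \<le> Sg" .
  have "n I = n (S + (I - S))" by simp
  also have "\<dots> \<le> n S + n (I - S)" using tri by blast
  finally show "n I \<le> J + e" using nS nIS d2 by linarith
qed


theorem mainTheorem15:
  fixes T U :: "real \<Rightarrow> real \<Rightarrow> ('a::banach \<Rightarrow>\<^sub>L 'a)"
    and B :: "real \<Rightarrow> ('a \<Rightarrow>\<^sub>L 'a)"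
    and nrm :: "real \<Rightarrow> 'a \<Rightarrow> real"
    and C \<epsilon> M a c :: real
  assumes evT: "evolution_family T"
    and nf: "norm_family nrm"
    and C_pos: "C > 0" and eps_nonneg: "\<epsilon> \<ge> 0"
    and nrm_bounds: "\<And>x t. t \<ge> 1 \<Longrightarrow> norm x \<le> nrm t x \<and> nrm t x \<le> C * t powr \<epsilon> * norm x"
    and M_pos: "M > 0" and a_pos: "a > 0"
    and T_bound: "\<And>t s x. t \<ge> s \<Longrightarrow> s \<ge> 1 \<Longrightarrow>
                    nrm t (blinfun_apply (T t s) x) \<le> M * (t / s) powr a * nrm s x"
    and B_cont: "\<And>x. continuous_on {1..} (\<lambda>t. blinfun_apply (B t) x)"
    and B_bound: "\<And>t. t \<ge> 1 \<Longrightarrow> norm (B t) \<le> c / t powr (1 + \<epsilon>)"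
    and evU: "evolution_family U"
    and U_eq: "\<And>t \<tau> x. t \<ge> \<tau> \<Longrightarrow> \<tau> \<ge> 1 \<Longrightarrow>
        ((\<lambda>s. blinfun_apply (T t s) (blinfun_apply (B s) (blinfun_apply (U s \<tau>) x)))
           has_integral (blinfun_apply (U t \<tau>) x - blinfun_apply (T t \<tau>) x)) {\<tau>..t}"
  shows "\<And>t \<tau> x. t \<ge> \<tau> \<Longrightarrow> \<tau> \<ge> 1 \<Longrightarrow>
           nrm t (blinfun_apply (U t \<tau>) x) \<le> M * (t / \<tau>) powr (a + c * C * M) * nrm \<tau> x"
proof -
  fix t \<tau> :: real and x :: 'a
  assume tt: "t \<ge> \<tau>" "\<tau> \<ge> 1"
  have isn: "\<And>r. r \<ge> 1 \<Longrightarrow> is_norm (nrm r)" using nf unfolding norm_family_def by blast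
  have tri: "\<And>r. r \<ge> 1 \<Longrightarrow> \<forall>y z. nrm r (y + z) \<le> nrm r y + nrm r z"
    using isn unfolding is_norm_def by blast
  have hom: "\<And>r. r \<ge> 1 \<Longrightarrow> \<forall>q y. nrm r (q *\<^sub>R y) = \<bar>q\<bar> * nrm r y"
    using isn unfolding is_norm_def by blast
  have nn: "\<And>r y. r \<ge> 1 \<Longrightarrow> nrm r y \<ge> 0" using isn unfolding is_norm_def by blast
  have nz: "\<And>r y. r \<ge> 1 \<Longrightarrow> nrm r y = 0 \<longleftrightarrow> y = 0" using isn unfolding is_norm_def by blast
  have Kb: "\<And>r. r \<ge> 1 \<Longrightarrow> \<forall>y. nrm r y \<le> (C * r powr \<epsilon>) * norm y"
    using nrm_bounds by simp
  have Tid: "T \<tau> \<tau> = id_blinfun" using evT tt unfolding evolution_family_def by auto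
  have Uid: "U \<tau> \<tau> = id_blinfun" using evU tt unfolding evolution_family_def by auto
  have Ucont: "continuous_on {\<tau>..} (\<lambda>s. blinfun_apply (U s \<tau>) x)"
    using evU tt unfolding evolution_family_def by auto
  have c_nn: "c \<ge> 0" using B_bound[of 1] order_trans[OF norm_ge_zero[of "B 1"]] by simp
  define k where "k = c * C * M"
  have k_nn: "k \<ge> 0" unfolding k_def using c_nn C_pos M_pos by simp
  define nx where "nx = nrm \<tau> x"
  define u where "u r = nrm r (blinfun_apply (U r \<tau>) x)" for r
  define F where "F s = M * (s / \<tau>) powr a * nx" for s
  define \<phi> where "\<phi> s = M * (s / \<tau>) powr (a + k) * nx" for s
  have u_nn: "\<And>r. r \<ge> 1 \<Longrightarrow> u r \<ge> 0" unfolding u_def using nn by blast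
  have "u t \<le> \<phi> t"
  proof (cases "x = 0")
    case True
    then show ?thesis unfolding u_def \<phi>_def nx_def
      using nz[of t 0] nz[of \<tau> 0] tt by simp
  next
    case False
    have nx_pos: "nx > 0" unfolding nx_def using nz[of \<tau> x] nn[of \<tau> x] tt False by simp
    have M1: "nx \<le> M * nx"
      using T_bound[of \<tau> \<tau> x] tt by (simp add: Tid nx_def)
    have "compact ((\<lambda>s. blinfun_apply (U s \<tau>) x) ` {\<tau>..t})"
      by (rule compact_continuous_image[OF continuous_on_subset[OF Ucont] compact_Icc]) auto
    then obtain Bn where Bn: "Bn > 0" "\<forall>r\<in>{\<tau>..t}. norm (blinfun_apply (U r \<tau>) x) \<le> Bn"
      by (auto dest!: compact_imp_bounded simp: bounded_pos)
    define Bd where "Bd = C * t powr \<epsilon> * Bn"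
    have u_bd: "u r \<le> Bd" if r: "r \<in> {\<tau>..t}" for r
    proof -
      have r1: "r \<ge> 1" using r tt by auto
      have "u r \<le> C * r powr \<epsilon> * norm (blinfun_apply (U r \<tau>) x)"
        unfolding u_def using nrm_bounds[OF r1] by blast
      also have "\<dots> \<le> C * t powr \<epsilon> * Bn"
        using r r1 Bn C_pos eps_nonneg
        by (intro mult_mono powr_mono2 mult_left_mono) auto
      finally show ?thesis unfolding Bd_def .
    qed
    have Bd_nn: "Bd \<ge> 0" unfolding Bd_def using C_pos Bn by simp
    have fb: "nrm s (blinfun_apply (T s r) (blinfun_apply (B r) (blinfun_apply (U r \<tau>) x)))
               \<le> k * (s / r) powr a / r * u r" if rs: "\<tau> \<le> r" "r \<le> s" for s r
    proof -
      have r1: "r \<ge> 1" using rs tt by auto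
      define y where "y = blinfun_apply (U r \<tau>) x"
      have "nrm s (blinfun_apply (T s r) (blinfun_apply (B r) y)) \<le> M * (s / r) powr a * nrm r (blinfun_apply (B r) y)"
        using T_bound rs r1 by blast
      also have "nrm r (blinfun_apply (B r) y) \<le> C * r powr \<epsilon> * (c / r powr (1 + \<epsilon>) * u r)"
      proof -
        have "norm (blinfun_apply (B r) y) \<le> norm (B r) * norm y" by (rule norm_blinfun)
        also have "\<dots> \<le> c / r powr (1 + \<epsilon>) * u r"
          using B_bound[OF r1] nrm_bounds[OF r1, of y] c_nn by (intro mult_mono) (auto simp: u_def y_def)
        finally have "norm (blinfun_apply (B r) y) \<le> c / r powr (1 + \<epsilon>) * u r" .
        then show ?thesis using nrm_bounds[OF r1, of "blinfun_apply (B r) y"] C_pos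
          by (smt (verit) mult_left_mono powr_ge_zero zero_le_mult_iff)
      qed
      also have "C * r powr \<epsilon> * (c / r powr (1 + \<epsilon>) * u r) = C * c / r * u r"
        using r1 by (simp add: powr_add)
      finally have "nrm s (blinfun_apply (T s r) (blinfun_apply (B r) y)) \<le> M * (s / r) powr a * (C * c / r * u r)"
        using M_pos by (simp add: mult_left_mono)
      then show ?thesis unfolding y_def k_def by (simp add: field_simps)
    qed
    have main: "u t \<le> (1 + \<delta>) * \<phi> t" if \<delta>: "\<delta> > 0" for \<delta>
    proof -
      define \<psi> where "\<psi> r = (1 + \<delta>) * \<phi> r" for r
      define Sset where "Sset = {t'\<in>{\<tau>..t}. \<forall>r\<in>{\<tau>..t'}. u r \<le> \<psi> r}"
      have u\<tau>: "u \<tau> \<le> \<psi> \<tau>"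
      proof -
        have e1: "u \<tau> = nx" by (simp add: u_def Uid nx_def)
        have e2: "\<psi> \<tau> = M * nx + \<delta> * (M * nx)" using tt by (simp add: \<psi>_def \<phi>_def algebra_simps)
        have "0 \<le> \<delta> * (M * nx)" using \<delta> M_pos nx_pos by simp
        then show ?thesis using e1 e2 M1 by linarith
      qed
      have \<tau>S: "\<tau> \<in> Sset" unfolding Sset_def using tt u\<tau> by auto
      have bdd: "bdd_above Sset" unfolding Sset_def bdd_above_def by auto
      define D where "D = Sup Sset"
      have D1: "\<tau> \<le> D" unfolding D_def using \<tau>S bdd by (rule cSup_upper)
      have D2: "D \<le> t" unfolding D_def using \<tau>S by (intro cSup_least) (auto simp: Sset_def)
      have below: "u r \<le> \<psi> r" if "\<tau> \<le> r" "r < D" for r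
      proof -
        obtain t' where "t' \<in> Sset" "r < t'" using \<open>r < D\<close> less_cSup_iff[of Sset r] \<tau>S bdd
          unfolding D_def by auto
        then show ?thesis unfolding Sset_def using that by auto
      qed
      define L where "L = k * (t / \<tau>) powr a / \<tau> * Bd"
      have L_nn: "L \<ge> 0" unfolding L_def using k_nn Bd_nn tt by simp
      define h where "h = \<delta> * (M * nx) / (L + 1)"
      have h_pos: "h > 0" unfolding h_def using \<delta> M_pos nx_pos L_nn by simp
      have claim: "u s \<le> \<psi> s" if s: "D \<le> s" "s \<le> t" "s - D \<le> h" for s
      proof -
        have s1: "s \<ge> 1" using s D1 tt by simp
        define f where "f r = blinfun_apply (T s r) (blinfun_apply (B r) (blinfun_apply (U r \<tau>) x))" for r
        have fint: "(f has_integral (blinfun_apply (U s \<tau>) x - blinfun_apply (T s \<tau>) x)) {\<tau>..s}"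
          unfolding f_def using U_eq[of \<tau> s x] s D1 tt by simp
        have fi: "f integrable_on {\<tau>..s}" using fint by (rule has_integral_integrable)
        have fi1: "f integrable_on {\<tau>..D}"
          by (rule integrable_subinterval_real[OF fi]) (use s in simp)
        have fi2: "f integrable_on {D..s}"
          by (rule integrable_subinterval_real[OF fi]) (use D1 in simp)
        define I1 where "I1 = integral {\<tau>..D} f"
        define I2 where "I2 = integral {D..s} f"
        have "(f has_integral (I1 + I2)) {\<tau>..s}" unfolding I1_def I2_def
          by (rule has_integral_combine[OF D1 s(1) integrable_integral[OF fi1] integrable_integral[OF fi2]])
        then have sumeq: "blinfun_apply (U s \<tau>) x = blinfun_apply (T s \<tau>) x + (I1 + I2)"
          using has_integral_unique[OF fint] by (simp add: algebra_simps)
        define A0 where "A0 = M * nx * s powr a * \<tau> powr (-(a + k))"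
        define H where "H r = A0 * r powr k" for r
        define g where "g r = k * (s / r) powr a / r * \<phi> r" for r
        have gH: "(g has_integral (H D - H \<tau>)) {\<tau>..D}"
        proof (rule fundamental_theorem_of_calculus[OF D1])
          fix r assume r: "r \<in> {\<tau>..D}"
          have rpos: "r > 0" using r tt by auto
          have "(H has_real_derivative A0 * (k * r powr (k - 1))) (at r)"
            unfolding H_def by (intro DERIV_cmult has_real_derivative_powr rpos)
          moreover have "A0 * (k * r powr (k - 1)) = g r"
            unfolding A0_def g_def \<phi>_def using rpos tt
            by (simp add: powr_divide powr_add powr_diff powr_minus field_simps)
          ultimately show "(H has_vector_derivative g r) (at r within {\<tau>..D})"
            by (simp add: has_real_derivative_iff_has_vector_derivative[symmetric] has_field_derivative_at_within)
        qed
        have g_nn: "g r \<ge> 0" if "r \<ge> 1" for r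
          unfolding g_def \<phi>_def using that k_nn M_pos nx_pos tt by simp
        have I1b: "nrm s I1 \<le> (1 + \<delta>) * (H D - H \<tau>)"
        proof (rule seminorm_integral[OF _ _ tri[OF s1] hom[OF s1] Kb[OF s1]])
          show "((\<lambda>r. if r = D then 0 else f r) has_integral I1) {\<tau>..D}"
            unfolding I1_def by (rule has_integral_spike[of "{D}" _ _ f]) (auto simp: fi1)
          show "((\<lambda>r. (1 + \<delta>) * g r) has_integral (1 + \<delta>) * (H D - H \<tau>)) {\<tau>..D}"
            by (rule has_integral_mult_right[OF gH])
          show "\<forall>r\<in>{\<tau>..D}. nrm s (if r = D then 0 else f r) \<le> (1 + \<delta>) * g r"
          proof
            fix r assume r: "r \<in> {\<tau>..D}"
            have r1: "r \<ge> 1" using r tt by auto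
            show "nrm s (if r = D then 0 else f r) \<le> (1 + \<delta>) * g r"
            proof (cases "r = D")
              case True
              have "nrm s 0 = 0" using nz[OF s1, of 0] by simp
              moreover have "0 \<le> (1 + \<delta>) * g r" using g_nn[OF r1] \<delta> by simp
              ultimately show ?thesis using True by simp
            next
              case False
              then have rD: "r < D" using r by auto
              have "nrm s (f r) \<le> k * (s / r) powr a / r * u r"
                unfolding f_def using fb r s by auto
              also have "\<dots> \<le> k * (s / r) powr a / r * \<psi> r"
                using below[of r] r rD k_nn r1 by (intro mult_left_mono) auto
              also have "\<dots> = (1 + \<delta>) * g r" unfolding \<psi>_def g_def by simp
              finally show ?thesis using False by simp
            qed
          qed
        qed
        have I2b: "nrm s I2 \<le> (s - D) * L"
        proof (rule seminorm_integral[OF _ _ tri[OF s1] hom[OF s1] Kb[OF s1]])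
          show "(f has_integral I2) {D..s}" unfolding I2_def using fi2 by auto
          show "((\<lambda>r. L) has_integral (s - D) * L) {D..s}"
            using has_integral_const_real[of L D s] s by simp
          show "\<forall>r\<in>{D..s}. nrm s (f r) \<le> L"
          proof
            fix r assume r: "r \<in> {D..s}"
            have r1: "r \<ge> 1" "r \<ge> \<tau>" using r tt D1 by auto
            have "nrm s (f r) \<le> k * (s / r) powr a / r * u r"
              unfolding f_def using fb r r1 by auto
            also have "\<dots> \<le> (k * (t / \<tau>) powr a / \<tau>) * Bd"
            proof (intro mult_mono)
              have "(s / r) powr a \<le> (t / \<tau>) powr a"
                using r r1 s tt a_pos by (intro powr_mono2) (auto simp: frac_le)
              moreover have "1 / r \<le> 1 / \<tau>" using r1 tt by (simp add: frac_le)
              ultimately have mm: "(s / r) powr a * (1 / r) \<le> (t / \<tau>) powr a * (1 / \<tau>)"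
                using tt r1 by (intro mult_mono) auto
              then show "k * (s / r) powr a / r \<le> k * (t / \<tau>) powr a / \<tau>"
                using mult_left_mono[OF mm k_nn] by simp
              show "u r \<le> Bd" using u_bd r r1 s by auto
              show "0 \<le> k * (t / \<tau>) powr a / \<tau>" using k_nn tt by simp
              show "0 \<le> u r" using u_nn r1 by simp
            qed
            finally show "nrm s (f r) \<le> L" unfolding L_def .
          qed
        qed
        have Hs: "H s = \<phi> s"
        proof -
          have "(s / \<tau>) powr (a + k) = s powr a * s powr k * inverse (\<tau> powr (a + k))"
            using s1 tt by (subst powr_divide) (auto simp: powr_add divide_inverse)
          moreover have "\<tau> powr (- a - k) = inverse (\<tau> powr (a + k))"
            using powr_minus[of \<tau> "a + k"] by simp
          ultimately show ?thesis unfolding H_def A0_def \<phi>_def by (simp add: mult_ac)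
        qed
        have Ht: "H \<tau> = F s"
        proof -
          have "\<tau> powr (-(a + k)) * \<tau> powr k = \<tau> powr (-(a + k) + k)"
            by (rule powr_add[symmetric])
          also have "\<dots> = inverse (\<tau> powr a)" by (simp add: powr_minus)
          finally have e: "\<tau> powr (-(a + k)) * \<tau> powr k = inverse (\<tau> powr a)" .
          have "(s / \<tau>) powr a = s powr a * inverse (\<tau> powr a)"
            using s1 tt by (subst powr_divide) (auto simp: divide_inverse)
          then show ?thesis unfolding H_def A0_def F_def using e
            by (simp add: mult_ac)
        qed
        have A0_nn: "A0 \<ge> 0" unfolding A0_def using M_pos nx_pos by simp
        have "D powr k \<le> s powr k" using s D1 tt k_nn by (intro powr_mono2) auto
        then have HD: "H D \<le> H s" unfolding H_def using A0_nn by (rule mult_left_mono)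
        have TB: "nrm s (blinfun_apply (T s \<tau>) x) \<le> F s"
          unfolding F_def nx_def using T_bound[of \<tau> s x] s D1 tt by simp
        have "u s \<le> nrm s (blinfun_apply (T s \<tau>) x) + (nrm s I1 + nrm s I2)"
          unfolding u_def sumeq using tri[OF s1] by (meson add_left_mono order_trans)
        also have "\<dots> \<le> F s + ((1 + \<delta>) * (\<phi> s - F s) + (s - D) * L)"
        proof -
          have "(1 + \<delta>) * (H D - H \<tau>) \<le> (1 + \<delta>) * (\<phi> s - F s)"
            using HD Hs Ht \<delta> by (intro mult_left_mono) auto
          then show ?thesis using TB I1b I2b by linarith
        qed
        finally have us: "u s \<le> F s + ((1 + \<delta>) * (\<phi> s - F s) + (s - D) * L)" .
        have "(s - D) * L \<le> h * L" using s L_nn by (intro mult_right_mono) auto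
        also have "\<dots> \<le> \<delta> * (M * nx)" unfolding h_def using L_nn \<delta> M_pos nx_pos
          by (simp add: field_simps)
        also have "\<dots> \<le> \<delta> * F s" unfolding F_def using \<delta> M_pos nx_pos s D1 tt a_pos
          using ge_one_powr_ge_zero[of "s / \<tau>" a]
          by (intro mult_left_mono) (auto simp: field_simps)
        finally show ?thesis using us unfolding \<psi>_def by (simp add: algebra_simps)
      qed
      have "D = t"
      proof (rule ccontr)
        assume "D \<noteq> t"
        then have Dt: "D < t" using D2 by simp
        define t' where "t' = min (D + h) t"
        have "t' \<in> Sset" unfolding Sset_def
        proof (intro CollectI conjI ballI)
          show "t' \<in> {\<tau>..t}" unfolding t'_def using D1 Dt h_pos by auto
          fix r assume r: "r \<in> {\<tau>..t'}"
          show "u r \<le> \<psi> r"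
          proof (cases "r < D")
            case True then show ?thesis using below r by auto
          next
            case False then show ?thesis using claim[of r] r unfolding t'_def by auto
          qed
        qed
        then have "t' \<le> D" unfolding D_def using bdd by (rule cSup_upper)
        then show False unfolding t'_def using Dt h_pos by auto
      qed
      then show ?thesis using claim[of t] h_pos unfolding \<psi>_def by simp
    qed
    show ?thesis
    proof (rule ccontr)
      assume "\<not> u t \<le> \<phi> t"
      then have lt: "\<phi> t < u t" by simp
      have \<phi>_nn: "\<phi> t \<ge> 0" unfolding \<phi>_def using M_pos nx_pos by simp
      define \<delta> where "\<delta> = (u t - \<phi> t) / (\<phi> t + 1)"
      have \<delta>: "\<delta> > 0" unfolding \<delta>_def using lt \<phi>_nn by simp
      have "\<delta> * \<phi> t < u t - \<phi> t"
      proof -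
        have "\<delta> * \<phi> t = (u t - \<phi> t) * (\<phi> t / (\<phi> t + 1))" unfolding \<delta>_def by simp
        also have "\<dots> < (u t - \<phi> t) * 1" using lt \<phi>_nn by (intro mult_strict_left_mono) auto
        finally show ?thesis by simp
      qed
      then show False using main[OF \<delta>] by (simp add: algebra_simps)
    qed
  qed
  then show "nrm t (blinfun_apply (U t \<tau>) x) \<le> M * (t / \<tau>) powr (a + c * C * M) * nrm \<tau> x"
    unfolding u_def \<phi>_def k_def nx_def .
qed

end
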